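(* Let $H : \mathcal E(2) \rightarrow \mathcal E(4)$ be a chain homotopy between $(23) \circ F$ and $G$ (i.e. $\partial\circ H + H\circ\partial = (23)\circ F + G$) satisfying \begin{equation*} H \circ (12) = (12)(34) \circ H. \end{equation*} Then, for any $\mathcal E$-algebra $A$ and $i \geq 0$, the map $\zeta_i: A \otimes A \to A$ defined by \begin{equation*} \zeta_i(\alpha \otimes \beta) = H(\tilde{x}_i)(\alpha \otimes \alpha \otimes \beta \otimes \beta) \end{equation*} is a Cartan $i$-coboundary, i.e. \begin{equation*} (\partial \zeta_i)(\alpha \otimes \beta) = (\alpha \cup_0 \beta) \cup_i (\alpha \cup_0 \beta) + \sum_{i=j+k} (\alpha \cup_j \alpha) \cup_0 (\beta \cup_k \beta). \end{equation*}
   Context: All constructions are over $\mathbb F_2$. $\mathcal E$ denotes the Barratt-Eccles operad: $\mathcal E(r) = N_*(E(r))$, the normalized chains of the simplicial set $E(r)$ whose $n$-simplices are tuples $(\sigma_0,\dots,\sigma_n)$ of permutations in $\Sigma_r$ (faces delete, degeneracies repeat an entry), with $\Sigma_r$ acting by left multiplication on each entry, and operadic composition $\circ_{\mathcal E} = N_*(\circ_E)\circ EZ^r$, where $\circ_E$ applies composition of permutations coordinatewise and $EZ$ is the Eilenberg-Zilber map. An $\mathcal E$-algebra $A$ is an operad morphism $\mathcal E \to \mathrm{End}(A)$; elements of $\mathcal E$ are identified with their images, and $\partial$ on $\mathrm{Hom}$ complexes is $\partial f = \partial\circ f + f\circ\partial$. Let $\tilde{x}_i = (e, (12), e, \dots,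 (12)^i) \in \mathcal E(2)_i$. The cup-$i$ product on $A$ is $\alpha \cup_i \beta := \tilde{x}_i(\alpha \otimes \beta)$. The chain maps $F, G : \mathcal E(2) \to \mathcal E(4)$ are defined on basis elements by $F(\sigma_0,\dots,\sigma_n) = \circ_{\mathcal E}\big((\sigma_0,\dots,\sigma_n) \otimes \tilde{x}_0 \otimes \tilde{x}_0\big)$ and $G(\sigma_0,\dots,\sigma_n) = \circ_{\mathcal E}\big(\tilde{x}_0 \otimes AW(\sigma_0,\dots,\sigma_n)^{\otimes 2}\big)$, with $AW$ the Alexander-Whitney map applied to the diagonal simplex. *)

theory Defs
  imports "HOL-Combinatorics.Permutations" "HOL-Library.Poly_Mapping" "HOL-Library.Z2"
begin

section \<open>Normalized chains of the Barratt-Eccles simplicial sets, over F_2\<close>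

text \<open>Permutations of {0..<r} (0-indexed), simplices of E(r) are lists (sigma_0,...,sigma_n)
  of permutations; chains are finitely supported F_2-valued functions on simplices.\<close>

type_synonym perm = "nat \<Rightarrow> nat"
type_synonym simp = "perm list"
type_synonym chain = "simp \<Rightarrow>\<^sub>0 bit"

definition nondeg :: "'v list \<Rightarrow> bool" where
  "nondeg s \<longleftrightarrow> (\<forall>i. Suc i < length s \<longrightarrow> s ! i \<noteq> s ! Suc i)"

text \<open>Class of a simplex in the normalized chains (degenerate simplices are zero).\<close>
definition bas :: "simp \<Rightarrow> chain" where
  "bas s = (if nondeg s then Poly_Mapping.single s 1 else 0)"

definition E_basis :: "nat \<Rightarrow> nat \<Rightarrow> simp set" where
  "E_basis r n = {s. length s = Suc n \<and> (\<forall>p\<in>set s. p permutes {..<r}) \<and> nondeg s}"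

definition E_chains :: "nat \<Rightarrow> nat \<Rightarrow> chain set" where
  "E_chains r n = {c. Poly_Mapping.keys c \<subseteq> E_basis r n}"

definition linext :: "(simp \<Rightarrow> 'b::comm_monoid_add) \<Rightarrow> chain \<Rightarrow> 'b" where
  "linext f c = (\<Sum>s\<in>Poly_Mapping.keys c. f s)"

definition del_nth :: "nat \<Rightarrow> 'v list \<Rightarrow> 'v list" where
  "del_nth i s = take i s @ drop (Suc i) s"

definition bdE :: "simp \<Rightarrow> chain" where
  "bdE s = (if length s \<le> 1 then 0 else (\<Sum>i<length s. bas (del_nth i s)))"

definition bdC :: "chain \<Rightarrow> chain" where
  "bdC c = linext bdE c"

definition act :: "perm \<Rightarrow> simp \<Rightarrow> simp" where
  "act \<tau> s = map (\<lambda>\<sigma>. \<tau> \<circ> \<sigma>) s"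

definition actc :: "perm \<Rightarrow> chain \<Rightarrow> chain" where
  "actc \<tau> c = linext (\<lambda>s. bas (act \<tau> s)) c"

text \<open>Composition of permutations in the (associative) permutation operad:
  gam ss sigma taus, where ss = [s_0,...,s_{r-1}] are the arities, sigma in Sigma_r,
  taus!j in Sigma_{s_j}. Output positions are grouped in blocks m = 0..r-1 of size
  s_{sigma m}; position (O_m + k) is sent to o_{sigma m} + tau_{sigma m}(k), where
  o_j is the offset of the j-th input block. This is the convention compatible with the
  action (sigma f)(x_0,...,x_{r-1}) = f(x_{sigma 0},...,x_{sigma (r-1)}) on End(A) below.\<close>
definition gam :: "nat list \<Rightarrow> perm \<Rightarrow> perm list \<Rightarrow> perm" where
  "gam ss \<sigma> \<tau>s p =
     (if p < sum_list ss then
        (let m = (LEAST m. p < (\<Sum>m'<Suc m. ss ! (\<sigma> m')));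
             k = p - (\<Sum>m'<m. ss ! (\<sigma> m'))
         in (\<Sum>i<\<sigma> m. ss ! i) + (\<tau>s ! (\<sigma> m)) k)
      else p)"

text \<open>Binary Eilenberg-Zilber (shuffle) map on simplices, as staircase paths.\<close>
fun ez_paths :: "'a list \<Rightarrow> 'b list \<Rightarrow> ('a \<times> 'b) list list" where
  "ez_paths [] ys = []"
| "ez_paths xs [] = []"
| "ez_paths [a] ys = [map (\<lambda>b. (a, b)) ys]"
| "ez_paths xs [b] = [map (\<lambda>a. (a, b)) xs]"
| "ez_paths (a # a' # xs) (b # b' # ys) =
     map ((#) (a, b)) (ez_paths (a' # xs) (b # b' # ys) @ ez_paths (a # a' # xs) (b' # ys))"

text \<open>Iterated Eilenberg-Zilber map EZ(x_0 (x) EZ(x_1 (x) ...)); vertices of the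
  product are lists (tuples) of vertices.\<close>
fun ez_multi :: "'a list list \<Rightarrow> 'a list list list" where
  "ez_multi [] = [[[]]]"
| "ez_multi (x # xs) =
     concat (map (\<lambda>w. map (map (\<lambda>(v, t). v # t)) (ez_paths x w)) (ez_multi xs))"

text \<open>Operadic composition on basis simplices: a in E(r), bs!j in E(ss!j), r = length ss.
  N(o_E) o EZ^r.\<close>
definition compE :: "nat list \<Rightarrow> simp \<Rightarrow> simp list \<Rightarrow> chain" where
  "compE ss a bs = sum_list (map (\<lambda>w. bas (map (\<lambda>v. gam ss (hd v) (tl v)) w)) (ez_multi (a # bs)))"

definition t12 :: perm where "t12 = Transposition.transpose 0 1"
definition t23 :: perm where "t23 = Transposition.transpose 1 2"
definition t12_34 :: perm where "t12_34 = Transposition.transpose 0 1 \<circ> Transposition.transpose 2 3"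

definition xt :: "nat \<Rightarrow> simp" where
  "xt i = map (\<lambda>m. if even m then id else t12) [0..<Suc i]"

definition Fmap :: "simp \<Rightarrow> chain" where
  "Fmap s = compE [2, 2] s [xt 0, xt 0]"

text \<open>G(s) = o(xt 0 (x) AW(s,s)), AW of the diagonal simplex = sum of front (x) back faces.\<close>
definition Gmap :: "simp \<Rightarrow> chain" where
  "Gmap s = (\<Sum>k<length s. compE [2, 2] (xt 0) [take (Suc k) s, drop k s])"

text \<open>A graded F_2-vector space A = (direct sum of A n) with differential of degree -1.
  The underlying F_2-vector space is an abelian group of exponent 2.\<close>
definition graded_F2_complex :: "(int \<Rightarrow> 'a::ab_group_add set) \<Rightarrow> ('a \<Rightarrow> 'a) \<Rightarrow> bool" where
  "graded_F2_complex A dA \<longleftrightarrow>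
     (\<forall>x::'a. x + x = 0) \<and>
     (\<forall>n. 0 \<in> A n \<and> (\<forall>x\<in>A n. \<forall>y\<in>A n. x + y \<in> A n)) \<and>
     (\<forall>x. \<exists>S c. finite S \<and> (\<forall>n\<in>S. c n \<in> A n) \<and> x = (\<Sum>n\<in>S. c n)) \<and>
     (\<forall>S c. finite S \<and> (\<forall>n\<in>S. c n \<in> A n) \<and> (\<Sum>n\<in>S. c n) = 0 \<longrightarrow> (\<forall>n\<in>S. c n = 0)) \<and>
     (\<forall>x y. dA (x + y) = dA x + dA y) \<and>
     (\<forall>n. \<forall>x\<in>A n. dA x \<in> A (n - 1)) \<and>
     (\<forall>x. dA (dA x) = 0)"

text \<open>Elements of Hom(A^{(x) r}, A) are represented as r-multilinear maps on lists of length r.\<close>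
definition multilin :: "nat \<Rightarrow> ('a::ab_group_add list \<Rightarrow> 'a) \<Rightarrow> bool" where
  "multilin r f \<longleftrightarrow>
     (\<forall>xs j y. length xs = r \<and> j < r \<longrightarrow> f (xs[j := xs ! j + y]) = f xs + f (xs[j := y]))"

definition hom_deg :: "(int \<Rightarrow> 'a set) \<Rightarrow> nat \<Rightarrow> int \<Rightarrow> ('a list \<Rightarrow> 'a) \<Rightarrow> bool" where
  "hom_deg A r d f \<longleftrightarrow>
     (\<forall>xs ns. length xs = r \<and> (\<forall>j<r. xs ! j \<in> A (ns j)) \<longrightarrow> f xs \<in> A ((\<Sum>j<r. ns j) + d))"

definition homd :: "('a::ab_group_add \<Rightarrow> 'a) \<Rightarrow> nat \<Rightarrow> ('a list \<Rightarrow> 'a) \<Rightarrow> 'a list \<Rightarrow> 'a" where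
  "homd dA r f xs = dA (f xs) + (\<Sum>j<r. f (xs[j := dA (xs ! j)]))"

definition phiC :: "(nat \<Rightarrow> simp \<Rightarrow> 'a list \<Rightarrow> 'a::ab_group_add) \<Rightarrow> nat \<Rightarrow> chain \<Rightarrow> 'a list \<Rightarrow> 'a" where
  "phiC \<phi> r c xs = linext (\<lambda>t. \<phi> r t xs) c"

definition block :: "nat list \<Rightarrow> nat \<Rightarrow> 'a list \<Rightarrow> 'a list" where
  "block ss j xs = take (ss ! j) (drop (\<Sum>i<j. ss ! i) xs)"

text \<open>An E-algebra structure: an operad morphism E -> End(A) (arities r >= 1), given on
  basis simplices by phi r s (extended linearly): degree-preserving, chain map,
  Sigma_r-equivariant, compatible with operadic composition and the unit.\<close>
definition E_algebra ::
  "(int \<Rightarrow> 'a::ab_group_add set) \<Rightarrow> ('a \<Rightarrow> 'a) \<Rightarrow> (nat \<Rightarrow> simp \<Rightarrow> 'a list \<Rightarrow> 'a) \<Rightarrow> bool" where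
  "E_algebra A dA \<phi> \<longleftrightarrow>
     graded_F2_complex A dA \<and>
     (\<forall>r\<ge>1. \<forall>n. \<forall>s\<in>E_basis r n. multilin r (\<phi> r s) \<and> hom_deg A r (int n) (\<phi> r s)) \<and>
     (\<forall>r\<ge>1. \<forall>n. \<forall>s\<in>E_basis r n. \<forall>xs. length xs = r \<longrightarrow>
        phiC \<phi> r (bdE s) xs = homd dA r (\<phi> r s) xs) \<and>
     (\<forall>r\<ge>1. \<forall>n. \<forall>s\<in>E_basis r n. \<forall>\<tau>. \<tau> permutes {..<r} \<longrightarrow> (\<forall>xs. length xs = r \<longrightarrow>
        \<phi> r (act \<tau> s) xs = \<phi> r s (map (\<lambda>j. xs ! \<tau> j) [0..<r]))) \<and>
     (\<forall>ss a bs n ms. length ss \<ge> 1 \<and> (\<forall>j<length ss. ss ! j \<ge> 1) \<and>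
        a \<in> E_basis (length ss) n \<and> length bs = length ss \<and>
        (\<forall>j<length ss. bs ! j \<in> E_basis (ss ! j) (ms j)) \<longrightarrow>
        (\<forall>xs. length xs = sum_list ss \<longrightarrow>
           phiC \<phi> (sum_list ss) (compE ss a bs) xs =
           \<phi> (length ss) a (map (\<lambda>j. \<phi> (ss ! j) (bs ! j) (block ss j xs)) [0..<length ss]))) \<and>
     (\<forall>x. \<phi> 1 [id] [x] = x)"

definition cup :: "(nat \<Rightarrow> simp \<Rightarrow> 'a list \<Rightarrow> 'a) \<Rightarrow> nat \<Rightarrow> 'a \<Rightarrow> 'a \<Rightarrow> 'a" where
  "cup \<phi> i a b = \<phi> 2 (xt i) [a, b]"

definition zeta :: "(nat \<Rightarrow> simp \<Rightarrow> 'a::ab_group_add list \<Rightarrow> 'a) \<Rightarrow> (simp \<Rightarrow> chain) \<Rightarrow> nat \<Rightarrow> 'a \<Rightarrow> 'a \<Rightarrow> 'a" where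
  "zeta \<phi> H i a b = phiC \<phi> 4 (H (xt i)) [a, a, b, b]"

end

theory Submission
  imports Defs
begin

lemma bit_cases2: "(b::bit) = 0 \<or> b = 1" by (cases b) auto

lemma linext_alt:
  assumes "finite S" "Poly_Mapping.keys c \<subseteq> S"
  shows "linext f c = (\<Sum>s\<in>S. if Poly_Mapping.lookup c s = 0 then 0 else f s)"
proof -
  have "linext f c = (\<Sum>s\<in>Poly_Mapping.keys c. if Poly_Mapping.lookup c s = 0 then 0 else f s)"
    unfolding linext_def by (rule sum.cong) (auto simp: in_keys_iff)
  also have "\<dots> = (\<Sum>s\<in>S. if Poly_Mapping.lookup c s = 0 then 0 else f s)"
    by (rule sum.mono_neutral_left) (use assms in \<open>auto simp: in_keys_iff\<close>)
  finally show ?thesis .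
qed

lemma linext_add:
  fixes f :: "simp \<Rightarrow> 'b::comm_monoid_add"
  assumes two: "\<forall>y::'b. y + y = 0"
  shows "linext f (c + d) = linext f c + linext f d"
proof -
  let ?S = "Poly_Mapping.keys c \<union> Poly_Mapping.keys d"
  have fin: "finite ?S" by simp
  have "linext f (c + d) = (\<Sum>s\<in>?S. if Poly_Mapping.lookup (c+d) s = 0 then 0 else f s)"
    by (rule linext_alt[OF fin]) (rule keys_add)
  also have "\<dots> = (\<Sum>s\<in>?S. (if Poly_Mapping.lookup c s = 0 then 0 else f s) + (if Poly_Mapping.lookup d s = 0 then 0 else f s))"
  proof (rule sum.cong[OF refl])
    fix s
    show "(if Poly_Mapping.lookup (c+d) s = 0 then 0 else f s) = (if Poly_Mapping.lookup c s = 0 then 0 else f s) + (if Poly_Mapping.lookup d s = 0 then 0 else f s)"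
    proof -
      have bb: "\<And>b::bit. b + b = 0" by (metis bit_cases2 add_0 bit_2_eq_0 one_add_one)
      have ff: "f s + f s = 0" using two by blast
      show ?thesis
        using bit_cases2[of "Poly_Mapping.lookup c s"] bit_cases2[of "Poly_Mapping.lookup d s"]
        by (elim disjE) (simp_all add: lookup_add ff bb)
    qed
  qed
  also have "\<dots> = linext f c + linext f d"
    by (simp add: sum.distrib linext_alt[OF fin])
  finally show ?thesis .
qed

lemma linext_zero: "linext f 0 = 0" by (simp add: linext_def)

lemma linext_sum:
  fixes f :: "simp \<Rightarrow> 'b::comm_monoid_add"
  assumes two: "\<forall>y::'b. y + y = 0" and "finite K"
  shows "linext f (\<Sum>k\<in>K. c k) = (\<Sum>k\<in>K. linext f (c k))"
  using assms(2) by induction (simp_all add: linext_zero linext_add[OF two])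

lemma linext_sum_list:
  fixes f :: "simp \<Rightarrow> 'b::comm_monoid_add"
  assumes two: "\<forall>y::'b. y + y = 0"
  shows "linext f (sum_list xs) = sum_list (map (linext f) xs)"
  by (induction xs) (simp_all add: linext_zero linext_add[OF two])

lemma linext_bas: "linext f (bas u) = (if nondeg u then f u else 0)"
  by (simp add: bas_def linext_def linext_zero)

lemma chain_two: "\<forall>y::chain. y + y = 0"
proof
  fix y :: chain
  show "y + y = 0"
  proof (rule poly_mapping_eqI)
    fix s
    have "\<And>b::bit. b + b = 0" by (metis bit_cases2 add_0 bit_2_eq_0 one_add_one)
    then show "Poly_Mapping.lookup (y + y) s = Poly_Mapping.lookup 0 s" by (simp add: lookup_add)
  qed
qed

lemma t12_0[simp]: "t12 0 = 1" and t12_1[simp]: "t12 1 = 0" by (simp_all add: t12_def)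
lemma t12_ne_id[simp]: "t12 \<noteq> id" "id \<noteq> t12" using t12_0 by (metis id_apply zero_neq_one)+
lemma t12_Suc0[simp]: "t12 (Suc 0) = 0" by (simp add: t12_def)
lemma t12_t12[simp]: "t12 \<circ> t12 = id" by (simp add: t12_def)
lemma t12_perm: "t12 permutes {..<2}" unfolding t12_def by (rule permutes_swap_id) auto

lemma xt_len[simp]: "length (xt i) = Suc i" by (simp add: xt_def)
lemma xt_nth: "m \<le> i \<Longrightarrow> xt i ! m = (if even m then id else t12)"
  by (simp add: xt_def nth_append del: upt_Suc)

lemma nondeg_iff_nth: "nondeg s \<longleftrightarrow> (\<forall>i. Suc i < length s \<longrightarrow> s ! i \<noteq> s ! Suc i)"
  by (simp add: nondeg_def)

lemma xt_nondeg: "nondeg (xt i)"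
  unfolding nondeg_def by (auto simp: xt_nth)

lemma xt_set: "set (xt i) \<subseteq> {id, t12}"
  by (auto simp: xt_def)

lemma xt_basis: "xt i \<in> E_basis 2 i"
proof -
  have "\<forall>p\<in>set (xt i). p permutes {..<2}"
  proof
    fix p assume "p \<in> set (xt i)"
    then have "p = id \<or> p = t12" using xt_set by blast
    then show "p permutes {..<2}" using t12_perm by (auto simp: permutes_id)
  qed
  then show ?thesis by (simp add: E_basis_def xt_nondeg)
qed

lemma eqI_nth: "length a = length b \<Longrightarrow> (\<And>m. m < length a \<Longrightarrow> a ! m = b ! m) \<Longrightarrow> a = b"
  by (simp add: list_eq_iff_nth_eq)

lemma take_xt: "k \<le> i \<Longrightarrow> take (Suc k) (xt i) = xt k"
  by (rule eqI_nth) (auto simp: xt_nth)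

lemma act_nth: "m < length s \<Longrightarrow> act \<tau> s ! m = \<tau> \<circ> s ! m" by (simp add: act_def)
lemma act_len[simp]: "length (act \<tau> s) = length s" by (simp add: act_def)

lemma drop_xt: "k \<le> i \<Longrightarrow> drop k (xt i) = (if even k then xt (i - k) else act t12 (xt (i - k)))"
  by (rule eqI_nth) (auto simp: xt_nth act_nth)

lemma del_first: "del_nth 0 (xt (Suc m)) = act t12 (xt m)"
  unfolding del_nth_def by (rule eqI_nth) (auto simp: xt_nth act_nth)

lemma del_last: "del_nth (Suc m) (xt (Suc m)) = xt m"
  unfolding del_nth_def by (simp add: take_xt)

lemma del_mid: "0 < j \<Longrightarrow> j < Suc m \<Longrightarrow> \<not> nondeg (del_nth j (xt (Suc m)))"
proof -
  assume j: "0 < j" "j < Suc m"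
  then obtain j' where j': "j = Suc j'" by (cases j) auto
  let ?d = "del_nth j (xt (Suc m))"
  have "?d ! j' = xt (Suc m) ! j'" using j j' by (simp add: del_nth_def nth_append)
  moreover have "?d ! Suc j' = xt (Suc m) ! Suc (Suc j')" using j j' by (simp add: del_nth_def nth_append)
  moreover have "length ?d = Suc m" using j by (simp add: del_nth_def)
  ultimately show ?thesis using j j' unfolding nondeg_def
    by (auto simp: xt_nth intro!: exI[of _ j'])
qed

lemma basis_take: "s \<in> E_basis r n \<Longrightarrow> k \<le> n \<Longrightarrow> take (Suc k) s \<in> E_basis r k"
  unfolding E_basis_def nondeg_def by (auto dest: in_set_takeD)

lemma basis_drop: "s \<in> E_basis r n \<Longrightarrow> k \<le> n \<Longrightarrow> drop k s \<in> E_basis r (n - k)"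
  unfolding E_basis_def nondeg_def by (auto dest: in_set_dropD)

lemma act_nondeg: "inj \<tau> \<Longrightarrow> nondeg s \<Longrightarrow> nondeg (act \<tau> s)"
  unfolding nondeg_def
proof (intro allI impI)
  fix i assume inj: "inj \<tau>" and nd: "\<forall>i. Suc i < length s \<longrightarrow> s ! i \<noteq> s ! Suc i" and i: "Suc i < length (act \<tau> s)"
  show "act \<tau> s ! i \<noteq> act \<tau> s ! Suc i"
  proof
    assume "act \<tau> s ! i = act \<tau> s ! Suc i"
    then have "\<tau> \<circ> s ! i = \<tau> \<circ> s ! Suc i" using i by (simp add: act_nth)
    then have "s ! i = s ! Suc i" using inj by (simp add: fun.inj_map_strong inj_eq fun_eq_iff)
    then show False using nd i by simp
  qed
qed

lemma ez_paths_set: "p \<in> set (ez_paths x y) \<Longrightarrow> (a, b) \<in> set p \<Longrightarrow> a \<in> set x \<and> b \<in> set y"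
  by (induction x y arbitrary: p rule: ez_paths.induct) auto

lemma ez_paths_ne: "p \<in> set (ez_paths x y) \<Longrightarrow> p \<noteq> []"
  by (induction x y arbitrary: p rule: ez_paths.induct) auto

lemma ez_multi_set: "w \<in> set (ez_multi xs) \<Longrightarrow> v \<in> set w \<Longrightarrow> length v = length xs \<and> (\<forall>k<length xs. v ! k \<in> set (xs ! k))"
proof (induction xs arbitrary: w v)
  case Nil then show ?case by simp
next
  case (Cons x xs)
  from Cons.prems obtain w' p where w': "w' \<in> set (ez_multi xs)" and p: "p \<in> set (ez_paths x w')"
    and w: "w = map (\<lambda>(v, t). v # t) p" by auto
  from Cons.prems(2) w obtain a t where at: "(a, t) \<in> set p" and v: "v = a # t" by auto
  from ez_paths_set[OF p at] have "a \<in> set x" "t \<in> set w'" by auto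
  with Cons.IH[OF w'] v show ?case by (auto simp: nth_Cons split: nat.split)
qed

lemma ez_multi_ne: "w \<in> set (ez_multi xs) \<Longrightarrow> w \<noteq> []"
proof (induction xs arbitrary: w)
  case Nil then show ?case by simp
next
  case (Cons x xs)
  then show ?case using ez_paths_ne by auto
qed

lemma keys_sum_list: "Poly_Mapping.keys (sum_list cs) \<subseteq> (\<Union>c\<in>set cs. Poly_Mapping.keys c)"
proof (induction cs)
  case Nil then show ?case by simp
next
  case (Cons a cs)
  then show ?case using keys_add[of a "sum_list cs"] by auto
qed

lemma keys_bas: "Poly_Mapping.keys (bas u) \<subseteq> {u} \<inter> {u. nondeg u}"
  by (auto simp: bas_def)

lemma keys_compE: "t \<in> Poly_Mapping.keys (compE ss a bs) \<Longrightarrow>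
  \<exists>w\<in>set (ez_multi (a # bs)). t = map (\<lambda>v. gam ss (hd v) (tl v)) w \<and> nondeg t"
  unfolding compE_def using keys_sum_list keys_bas by fastforce

lemma two22: "x < 2 \<Longrightarrow> [2::nat, 2] ! x = 2" by (cases x) auto

lemma gam22:
  assumes p: "p < 4" and s0: "\<sigma> 0 < 2" and s1: "\<sigma> 1 < 2"
  shows "gam [2,2] \<sigma> [id,id] p = 2 * \<sigma> (p div 2) + p mod 2"
proof (cases "p < 2")
  case True
  have L: "(LEAST m. p < (\<Sum>m'<Suc m. [2::nat,2] ! (\<sigma> m'))) = 0"
    by (rule Least_equality) (use True s0 in \<open>simp_all add: two22\<close>)
  have S: "(\<Sum>i<\<sigma> 0. [2::nat,2] ! i) = 2 * \<sigma> 0"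
    using s0 by (cases "\<sigma> 0") auto
  have "[id, id] ! \<sigma> 0 = id" using s0 by (cases "\<sigma> 0") auto
  moreover have I: "([id, id] ! \<sigma> 0) p = p" using s0 by (cases "\<sigma> 0") auto
  moreover have "p < sum_list [2::nat,2]" using p by simp
  ultimately show ?thesis using True unfolding gam_def Let_def L by (simp add: S I)
next
  case False
  have L: "(LEAST m. p < (\<Sum>m'<Suc m. [2::nat,2] ! (\<sigma> m'))) = 1"
  proof (rule Least_equality)
    show "p < (\<Sum>m'<Suc 1. [2::nat,2] ! (\<sigma> m'))" using p s0 s1 by (simp add: two22)
  next
    fix y assume "p < (\<Sum>m'<Suc y. [2::nat,2] ! (\<sigma> m'))"
    then show "1 \<le> y" using False s0 by (cases y) (auto simp: two22)
  qed
  have S: "(\<Sum>i<\<sigma> (Suc 0). [2::nat,2] ! i) = 2 * \<sigma> (Suc 0)"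
    using s1 by (cases "\<sigma> 1") auto
  have "[id, id] ! \<sigma> 1 = id" using s1 by (cases "\<sigma> 1") auto
  moreover have "p = 2 \<or> p = 3" using False p by auto
  then have "p div 2 = 1" "p mod 2 = p - 2" by auto
  moreover have I: "([id, id] ! \<sigma> (Suc 0)) (p - 2) = p - 2" using s1 by (cases "\<sigma> 1") auto
  moreover have "p < sum_list [2::nat,2]" using p by simp
  moreover have "(\<Sum>m'<1. [2::nat,2] ! (\<sigma> m')) = 2" using s0 by (simp add: two22)
  ultimately show ?thesis using False unfolding gam_def Let_def L by (simp add: S I)
qed

lemma gam22_big: "\<not> p < 4 \<Longrightarrow> gam [2,2] \<sigma> [id,id] p = p"
  by (simp add: gam_def)

lemma gam22_id: "gam [2,2] id [id,id] = id"
proof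
  fix p show "gam [2,2] id [id,id] p = id p"
    by (cases "p < 4") (auto simp: gam22 gam22_big)
qed

lemma gam22_t12: "gam [2,2] t12 [id,id] = Transposition.transpose 0 2 \<circ> Transposition.transpose 1 3"
proof
  fix p show "gam [2,2] t12 [id,id] p = (Transposition.transpose 0 2 \<circ> Transposition.transpose 1 3) p"
  proof (cases "p < 4")
    case True
    have g: "gam [2,2] t12 [id,id] p = 2 * t12 (p div 2) + p mod 2" by (rule gam22) (simp_all add: True)
    have "p = 0 \<or> p = 1 \<or> p = 2 \<or> p = 3" using True by auto
    then show ?thesis unfolding g by (auto simp: Transposition.transpose_def)
  next
    case False then show ?thesis by (auto simp: gam22_big Transposition.transpose_def)
  qed
qed

lemma gam22_perm: "\<sigma> \<in> {id, t12} \<Longrightarrow> gam [2,2] \<sigma> [id,id] permutes {..<4}"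
  by (auto simp: gam22_id gam22_t12 intro!: permutes_compose permutes_swap_id)

lemma xt0: "xt 0 = [id]" by (simp add: xt_def)

lemma keys_Fmap: "t \<in> Poly_Mapping.keys (Fmap (xt i)) \<Longrightarrow> \<exists>n. t \<in> E_basis 4 n"
proof -
  assume "t \<in> Poly_Mapping.keys (Fmap (xt i))"
  then obtain w where w: "w \<in> set (ez_multi [xt i, [id], [id]])" and t: "t = map (\<lambda>v. gam [2,2] (hd v) (tl v)) w" and nd: "nondeg t"
    using keys_compE unfolding Fmap_def xt0 by blast
  have "\<forall>p\<in>set t. p permutes {..<4}"
  proof
    fix p assume "p \<in> set t"
    then obtain v where v: "v \<in> set w" and pv: "p = gam [2,2] (hd v) (tl v)" using t by auto
    from ez_multi_set[OF w v] have len: "length v = 3" and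
      H: "\<forall>k<3. v ! k \<in> set ([xt i, [id], [id]] ! k)" by auto
    have v0: "v ! 0 \<in> set (xt i)" using H[rule_format, of 0] by simp
    have v1: "v ! Suc 0 = id" using H[rule_format, of 1] by simp
    have v2: "v ! Suc (Suc 0) = id" using H[rule_format, of 2] by (simp add: numeral_2_eq_2)
    have ne: "v \<noteq> []" using len by auto
    have hd: "hd v = v ! 0" using ne by (simp add: hd_conv_nth)
    have tl: "tl v = [id, id]"
    proof (rule eqI_nth)
      show "length (tl v) = length [id, id]" using len by simp
      fix m assume "m < length (tl v)"
      then have "m = 0 \<or> m = Suc 0" using len by auto
      then show "tl v ! m = [id, id] ! m" using v1 v2 len by (auto simp: nth_tl)
    qed
    have "v ! 0 \<in> {id, t12}" using v0 xt_set by blast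
    then show "p permutes {..<4}" using pv gam22_perm hd tl by simp
  qed
  moreover have "t \<noteq> []" using t ez_multi_ne[OF w] by simp
  ultimately have "t \<in> E_basis 4 (length t - 1)" using nd by (simp add: E_basis_def)
  then show ?thesis by blast
qed

lemma alg_two:
  fixes A :: "int \<Rightarrow> 'a::ab_group_add set"
  shows "E_algebra A dA \<phi> \<Longrightarrow> \<forall>x::'a. x + x = 0"
  by (simp add: E_algebra_def graded_F2_complex_def)

lemma alg_dA_add: "E_algebra A dA \<phi> \<Longrightarrow> dA (x + y) = dA x + dA y"
  by (simp add: E_algebra_def graded_F2_complex_def)

lemma alg_dA_0: "E_algebra A dA \<phi> \<Longrightarrow> dA 0 = 0"
  using alg_dA_add[of A dA \<phi> 0 0] by simp

lemma alg_dA_sum: "E_algebra A dA \<phi> \<Longrightarrow> dA (\<Sum>k\<in>K. f k) = (\<Sum>k\<in>K. dA (f k))"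
proof (cases "finite K")
  case True
  assume alg: "E_algebra A dA \<phi>"
  from True show ?thesis by induction (simp_all add: alg_dA_0[OF alg] alg_dA_add[OF alg])
next
  case False
  assume alg: "E_algebra A dA \<phi>"
  with False show ?thesis by (simp add: alg_dA_0)
qed

lemma phiC_add:
  fixes \<phi> :: "nat \<Rightarrow> simp \<Rightarrow> 'a::ab_group_add list \<Rightarrow> 'a"
  shows "\<forall>x::'a::ab_group_add. x + x = 0 \<Longrightarrow> phiC \<phi> r (c + d) xs = phiC \<phi> r c xs + phiC \<phi> r d xs"
  unfolding phiC_def by (rule linext_add)

lemma phiC_zero: "phiC \<phi> r 0 xs = 0"
  by (simp add: phiC_def linext_zero)

lemma phiC_sum:
  fixes \<phi> :: "nat \<Rightarrow> simp \<Rightarrow> 'a::ab_group_add list \<Rightarrow> 'a"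
  shows "\<forall>x::'a::ab_group_add. x + x = 0 \<Longrightarrow> finite K \<Longrightarrow>
    phiC \<phi> r (\<Sum>k\<in>K. c k) xs = (\<Sum>k\<in>K. phiC \<phi> r (c k) xs)"
  unfolding phiC_def by (rule linext_sum)

lemma phiC_bas: "phiC \<phi> r (bas u) xs = (if nondeg u then \<phi> r u xs else 0)"
  by (simp add: phiC_def linext_bas)

lemma phiC_keys: "phiC \<phi> r c xs = (\<Sum>t\<in>Poly_Mapping.keys c. \<phi> r t xs)"
  by (simp add: phiC_def linext_def)

lemma alg_equiv:
  assumes "E_algebra A dA \<phi>" "r \<ge> 1" "s \<in> E_basis r n" "\<tau> permutes {..<r}" "length xs = r"
  shows "\<phi> r (act \<tau> s) xs = \<phi> r s (map (\<lambda>j. xs ! \<tau> j) [0..<r])"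
proof -
  have H: "\<forall>r\<ge>1. \<forall>n. \<forall>s\<in>E_basis r n. \<forall>\<tau>. \<tau> permutes {..<r} \<longrightarrow> (\<forall>xs. length xs = r \<longrightarrow>
        \<phi> r (act \<tau> s) xs = \<phi> r s (map (\<lambda>j. xs ! \<tau> j) [0..<r]))"
    using assms(1) unfolding E_algebra_def by (elim conjE) assumption
  show ?thesis using H[rule_format, OF assms(2) assms(3) assms(4) assms(5)] .
qed

lemma alg_chain:
  assumes "E_algebra A dA \<phi>" "r \<ge> 1" "s \<in> E_basis r n" "length xs = r"
  shows "phiC \<phi> r (bdE s) xs = homd dA r (\<phi> r s) xs"
proof -
  have H: "\<forall>r\<ge>1. \<forall>n. \<forall>s\<in>E_basis r n. \<forall>xs. length xs = r \<longrightarrow>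
        phiC \<phi> r (bdE s) xs = homd dA r (\<phi> r s) xs"
    using assms(1) unfolding E_algebra_def by (elim conjE) assumption
  show ?thesis using H[rule_format, OF assms(2) assms(3) assms(4)] .
qed

lemma alg_multilin:
  assumes "E_algebra A dA \<phi>" "r \<ge> 1" "s \<in> E_basis r n"
  shows "multilin r (\<phi> r s)"
proof -
  have H: "\<forall>r\<ge>1. \<forall>n. \<forall>s\<in>E_basis r n. multilin r (\<phi> r s) \<and> hom_deg A r (int n) (\<phi> r s)"
    using assms(1) unfolding E_algebra_def by (elim conjE) assumption
  show ?thesis using H[rule_format, OF assms(2) assms(3)] by blast
qed

lemma homd_phiC:
  fixes \<phi> :: "nat \<Rightarrow> simp \<Rightarrow> 'a::ab_group_add list \<Rightarrow> 'a"
  assumes alg: "E_algebra A dA \<phi>" and keys: "\<forall>t\<in>Poly_Mapping.keys c. \<exists>n. t \<in> E_basis r n"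
    and r: "r \<ge> 1" and len: "length xs = r"
  shows "homd dA r (phiC \<phi> r c) xs = phiC \<phi> r (bdC c) xs"
proof -
  let ?K = "Poly_Mapping.keys c"
  have cm: "\<And>t. t \<in> ?K \<Longrightarrow> phiC \<phi> r (bdE t) xs = homd dA r (\<phi> r t) xs"
  proof -
    fix t assume "t \<in> ?K"
    then obtain n where "t \<in> E_basis r n" using keys by blast
    then show "phiC \<phi> r (bdE t) xs = homd dA r (\<phi> r t) xs"
      by (rule alg_chain[OF alg r _ len])
  qed
  have "homd dA r (phiC \<phi> r c) xs = dA (\<Sum>t\<in>?K. \<phi> r t xs) + (\<Sum>j<r. \<Sum>t\<in>?K. \<phi> r t (xs[j := dA (xs ! j)]))"
    by (simp add: homd_def phiC_keys)
  also have "\<dots> = (\<Sum>t\<in>?K. dA (\<phi> r t xs)) + (\<Sum>t\<in>?K. \<Sum>j<r. \<phi> r t (xs[j := dA (xs ! j)]))"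
    by (simp add: alg_dA_sum[OF alg] sum.swap[of _ "{..<r}"])
  also have "\<dots> = (\<Sum>t\<in>?K. homd dA r (\<phi> r t) xs)"
    by (simp add: homd_def sum.distrib)
  also have "\<dots> = (\<Sum>t\<in>?K. phiC \<phi> r (bdE t) xs)"
    by (rule sum.cong) (simp_all add: cm)
  also have "\<dots> = phiC \<phi> r (\<Sum>t\<in>?K. bdE t) xs"
    by (rule phiC_sum[symmetric]) (simp_all add: alg_two[OF alg])
  also have "\<dots> = phiC \<phi> r (bdC c) xs"
    by (simp add: bdC_def linext_def)
  finally show ?thesis .
qed

lemma phiC_actc:
  fixes \<phi> :: "nat \<Rightarrow> simp \<Rightarrow> 'a::ab_group_add list \<Rightarrow> 'a"
  assumes alg: "E_algebra A dA \<phi>" and keys: "\<forall>t\<in>Poly_Mapping.keys c. \<exists>n. t \<in> E_basis r n"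
    and r: "r \<ge> 1" and tau: "\<tau> permutes {..<r}" and len: "length xs = r"
  shows "phiC \<phi> r (actc \<tau> c) xs = phiC \<phi> r c (map (\<lambda>j. xs ! \<tau> j) [0..<r])"
proof -
  let ?K = "Poly_Mapping.keys c"
  have eq: "\<And>t. t \<in> ?K \<Longrightarrow> phiC \<phi> r (bas (act \<tau> t)) xs = \<phi> r t (map (\<lambda>j. xs ! \<tau> j) [0..<r])"
  proof -
    fix t assume "t \<in> ?K"
    then obtain n where tb: "t \<in> E_basis r n" using keys by blast
    then have "nondeg t" by (simp add: E_basis_def)
    then have "nondeg (act \<tau> t)" by (rule act_nondeg[OF permutes_inj[OF tau]])
    moreover have "\<phi> r (act \<tau> t) xs = \<phi> r t (map (\<lambda>j. xs ! \<tau> j) [0..<r])"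
      by (rule alg_equiv[OF alg r tb tau len])
    ultimately show "phiC \<phi> r (bas (act \<tau> t)) xs = \<phi> r t (map (\<lambda>j. xs ! \<tau> j) [0..<r])"
      by (simp add: phiC_bas)
  qed
  have "phiC \<phi> r (actc \<tau> c) xs = phiC \<phi> r (\<Sum>t\<in>?K. bas (act \<tau> t)) xs"
    by (simp add: actc_def linext_def)
  also have "\<dots> = (\<Sum>t\<in>?K. phiC \<phi> r (bas (act \<tau> t)) xs)"
    by (rule phiC_sum) (simp_all add: alg_two[OF alg])
  also have "\<dots> = (\<Sum>t\<in>?K. \<phi> r t (map (\<lambda>j. xs ! \<tau> j) [0..<r]))"
    by (rule sum.cong) (simp_all add: eq)
  also have "\<dots> = phiC \<phi> r c (map (\<lambda>j. xs ! \<tau> j) [0..<r])"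
    by (simp add: phiC_keys)
  finally show ?thesis .
qed

lemma phiC_zero_entry:
  fixes \<phi> :: "nat \<Rightarrow> simp \<Rightarrow> 'a::ab_group_add list \<Rightarrow> 'a"
  assumes alg: "E_algebra A dA \<phi>" and keys: "\<forall>t\<in>Poly_Mapping.keys c. \<exists>n. t \<in> E_basis r n"
    and r: "r \<ge> 1" and len: "length xs = r" and j: "j < r"
  shows "phiC \<phi> r c (xs[j := 0]) = 0"
proof -
  have "\<And>t. t \<in> Poly_Mapping.keys c \<Longrightarrow> \<phi> r t (xs[j := 0]) = 0"
  proof -
    fix t assume "t \<in> Poly_Mapping.keys c"
    then obtain n where tb: "t \<in> E_basis r n" using keys by blast
    then have ml: "multilin r (\<phi> r t)" by (rule alg_multilin[OF alg r])
    let ?ys = "xs[j := 0]"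
    have "\<phi> r t (?ys[j := ?ys ! j + 0]) = \<phi> r t ?ys + \<phi> r t (?ys[j := 0])"
    proof -
      have ly: "length ?ys = r" using len by simp
      show ?thesis using ml[unfolded multilin_def, rule_format, of ?ys j 0] ly j by blast
    qed
    then have "\<phi> r t ?ys = \<phi> r t ?ys + \<phi> r t ?ys" using len j by simp
    then show "\<phi> r t ?ys = 0" by simp
  qed
  then show ?thesis by (simp add: phiC_keys)
qed

lemma alg_comp22:
  fixes \<phi> :: "nat \<Rightarrow> simp \<Rightarrow> 'a::ab_group_add list \<Rightarrow> 'a"
  assumes alg: "E_algebra A dA \<phi>" and a: "a \<in> E_basis 2 n"
    and b0: "b0 \<in> E_basis 2 m0" and b1: "b1 \<in> E_basis 2 m1"
  shows "phiC \<phi> 4 (compE [2,2] a [b0,b1]) [x0,x1,x2,x3] = \<phi> 2 a [\<phi> 2 b0 [x0,x1], \<phi> 2 b1 [x2,x3]]"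
proof -
  let ?ms = "\<lambda>j::nat. if j = 0 then m0 else m1"
  have bs: "\<forall>j<length [2::nat,2]. [b0,b1] ! j \<in> E_basis ([2,2] ! j) (?ms j)"
  proof (intro allI impI)
    fix j assume "j < length [2::nat,2]"
    then have "j = 0 \<or> j = 1" by auto
    then show "[b0,b1] ! j \<in> E_basis ([2,2] ! j) (?ms j)" using b0 b1 by auto
  qed
  have ax: "\<forall>ss a bs n ms. length ss \<ge> 1 \<and> (\<forall>j<length ss. ss ! j \<ge> 1) \<and>
        a \<in> E_basis (length ss) n \<and> length bs = length ss \<and>
        (\<forall>j<length ss. bs ! j \<in> E_basis (ss ! j) (ms j)) \<longrightarrow>
        (\<forall>xs. length xs = sum_list ss \<longrightarrow>
           phiC \<phi> (sum_list ss) (compE ss a bs) xs =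
           \<phi> (length ss) a (map (\<lambda>j. \<phi> (ss ! j) (bs ! j) (block ss j xs)) [0..<length ss]))"
    using alg unfolding E_algebra_def by blast
  have c1: "\<forall>j<length [2::nat,2]. [2::nat,2] ! j \<ge> 1"
    by (auto simp: less_Suc_eq nth_Cons split: nat.split)
  have cond: "length [2::nat,2] \<ge> 1 \<and> (\<forall>j<length [2::nat,2]. [2::nat,2] ! j \<ge> 1) \<and>
        a \<in> E_basis (length [2::nat,2]) n \<and> length [b0,b1] = length [2::nat,2] \<and>
        (\<forall>j<length [2::nat,2]. [b0,b1] ! j \<in> E_basis ([2,2] ! j) (?ms j))"
    using a bs c1 by (simp add: numeral_2_eq_2)
  have main: "phiC \<phi> (sum_list [2,2]) (compE [2,2] a [b0,b1]) [x0,x1,x2,x3] =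
           \<phi> (length [2::nat,2]) a (map (\<lambda>j. \<phi> ([2,2] ! j) ([b0,b1] ! j) (block [2,2] j [x0,x1,x2,x3])) [0..<length [2::nat,2]])"
    by (rule ax[rule_format, OF cond]) simp
  have e4: "sum_list [2::nat,2] = 4" by simp
  have e2: "length [2::nat,2] = 2" by simp
  have u2: "[0..<2] = [0::nat,1]" by (simp add: upt_rec)
  have n0: "[2::nat,2] ! 0 = 2" "[2::nat,2] ! 1 = 2" "[b0,b1] ! 0 = b0" "[b0,b1] ! 1 = b1" by simp_all
  have bl: "block [2,2] 0 [x0,x1,x2,x3] = [x0,x1]" "block [2,2] 1 [x0,x1,x2,x3] = [x2,x3]"
    by (simp_all add: block_def)
  show ?thesis using main by (simp only: e4 e2 u2 list.map n0 bl)
qed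

lemma upt4: "[0..<4] = [0::nat,1,2,3]" by (simp add: upt_rec)
lemma upt2: "[0..<2] = [0::nat,1]" by (simp add: upt_rec)
lemma t23_perm: "t23 permutes {..<4}" unfolding t23_def by (rule permutes_swap_id) auto
lemma t12_34_perm: "t12_34 permutes {..<4}" unfolding t12_34_def
  by (intro permutes_compose permutes_swap_id) auto
lemma perm_t23: "map (\<lambda>j. [a,a,b,b] ! t23 j) [0..<4] = [a,b,a,b]"
  by (simp add: upt4 t23_def Transposition.transpose_def)
lemma perm_t12_34: "map (\<lambda>j. [a,a,b,b] ! t12_34 j) [0..<4] = [a,a,b,b]"
  by (simp add: upt4 t12_34_def Transposition.transpose_def)
lemma perm_t12_2: "map (\<lambda>j. [b,b] ! t12 j) [0..<2] = [b,b]"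
  by (simp add: upt2)

theorem mainTheorem2:
  fixes H :: "simp \<Rightarrow> chain"
    and A :: "int \<Rightarrow> 'a::ab_group_add set" and dA :: "'a \<Rightarrow> 'a"
    and \<phi> :: "nat \<Rightarrow> simp \<Rightarrow> 'a list \<Rightarrow> 'a"
    and i :: nat and \<alpha> \<beta> :: 'a
  assumes H_maps: "\<forall>n. \<forall>s\<in>E_basis 2 n. H s \<in> E_chains 4 (Suc n)"
    and H_htpy: "\<forall>n. \<forall>s\<in>E_basis 2 n. bdC (H s) + linext H (bdE s) = actc t23 (Fmap s) + Gmap s"
    and H_equiv: "\<forall>n. \<forall>s\<in>E_basis 2 n. H (act t12 s) = actc t12_34 (H s)"
    and alg: "E_algebra A dA \<phi>"
  shows "homd dA 4 (phiC \<phi> 4 (H (xt i))) [\<alpha>, \<alpha>, \<beta>, \<beta>] =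
           cup \<phi> i (cup \<phi> 0 \<alpha> \<beta>) (cup \<phi> 0 \<alpha> \<beta>)
           + (\<Sum>j\<le>i. cup \<phi> 0 (cup \<phi> j \<alpha> \<alpha>) (cup \<phi> (i - j) \<beta> \<beta>))
       \<and> (dA \<alpha> = 0 \<and> dA \<beta> = 0 \<longrightarrow>
           dA (zeta \<phi> H i \<alpha> \<beta>) =
           cup \<phi> i (cup \<phi> 0 \<alpha> \<beta>) (cup \<phi> 0 \<alpha> \<beta>)
           + (\<Sum>j\<le>i. cup \<phi> 0 (cup \<phi> j \<alpha> \<alpha>) (cup \<phi> (i - j) \<beta> \<beta>)))"
proof -
  have two: "\<forall>x::'a. x + x = 0" by (rule alg_two[OF alg])
  let ?s = "xt i"
  let ?xs = "[\<alpha>, \<alpha>, \<beta>, \<beta>]"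
  have sb: "?s \<in> E_basis 2 i" by (rule xt_basis)
  have keysH: "\<And>m. \<forall>t\<in>Poly_Mapping.keys (H (xt m)). \<exists>n. t \<in> E_basis 4 n"
  proof -
    fix m
    have "H (xt m) \<in> E_chains 4 (Suc m)" using H_maps xt_basis by blast
    then show "\<forall>t\<in>Poly_Mapping.keys (H (xt m)). \<exists>n. t \<in> E_basis 4 n" unfolding E_chains_def by blast
  qed
  have hom: "homd dA 4 (phiC \<phi> 4 (H ?s)) ?xs = phiC \<phi> 4 (bdC (H ?s)) ?xs"
    by (rule homd_phiC[OF alg keysH]) simp_all
  have bd: "bdC (H ?s) = actc t23 (Fmap ?s) + Gmap ?s + linext H (bdE ?s)"
  proof -
    have e: "bdC (H ?s) + linext H (bdE ?s) = actc t23 (Fmap ?s) + Gmap ?s" using H_htpy sb by blast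
    have "bdC (H ?s) = bdC (H ?s) + (linext H (bdE ?s) + linext H (bdE ?s))" using chain_two by simp
    also have "\<dots> = (bdC (H ?s) + linext H (bdE ?s)) + linext H (bdE ?s)" by (simp add: add.assoc)
    finally show ?thesis using e by simp
  qed
  have F: "phiC \<phi> 4 (actc t23 (Fmap ?s)) ?xs = cup \<phi> i (cup \<phi> 0 \<alpha> \<beta>) (cup \<phi> 0 \<alpha> \<beta>)"
  proof -
    have kF: "\<forall>t\<in>Poly_Mapping.keys (Fmap ?s). \<exists>n. t \<in> E_basis 4 n" using keys_Fmap by blast
    have "phiC \<phi> 4 (actc t23 (Fmap ?s)) ?xs = phiC \<phi> 4 (Fmap ?s) (map (\<lambda>j. ?xs ! t23 j) [0..<4])"
      by (rule phiC_actc[OF alg kF _ t23_perm]) simp_all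
    also have "\<dots> = phiC \<phi> 4 (Fmap ?s) [\<alpha>, \<beta>, \<alpha>, \<beta>]" by (simp only: perm_t23)
    also have "\<dots> = \<phi> 2 ?s [\<phi> 2 (xt 0) [\<alpha>, \<beta>], \<phi> 2 (xt 0) [\<alpha>, \<beta>]]"
      unfolding Fmap_def by (rule alg_comp22[OF alg sb xt_basis xt_basis])
    finally show ?thesis by (simp add: cup_def)
  qed
  have G: "phiC \<phi> 4 (Gmap ?s) ?xs = (\<Sum>j\<le>i. cup \<phi> 0 (cup \<phi> j \<alpha> \<alpha>) (cup \<phi> (i - j) \<beta> \<beta>))"
  proof -
    have "phiC \<phi> 4 (Gmap ?s) ?xs = (\<Sum>k<Suc i. phiC \<phi> 4 (compE [2,2] (xt 0) [take (Suc k) ?s, drop k ?s]) ?xs)"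
      unfolding Gmap_def xt_len by (rule phiC_sum[OF two]) simp
    also have "\<dots> = (\<Sum>k<Suc i. cup \<phi> 0 (cup \<phi> k \<alpha> \<alpha>) (cup \<phi> (i - k) \<beta> \<beta>))"
    proof (rule sum.cong[OF refl])
      fix k assume "k \<in> {..<Suc i}"
      then have k: "k \<le> i" by simp
      have tb: "take (Suc k) ?s \<in> E_basis 2 k" by (rule basis_take[OF sb k])
      have db: "drop k ?s \<in> E_basis 2 (i - k)" by (rule basis_drop[OF sb k])
      have c: "phiC \<phi> 4 (compE [2,2] (xt 0) [take (Suc k) ?s, drop k ?s]) ?xs =
          \<phi> 2 (xt 0) [\<phi> 2 (take (Suc k) ?s) [\<alpha>, \<alpha>], \<phi> 2 (drop k ?s) [\<beta>, \<beta>]]"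
        by (rule alg_comp22[OF alg xt_basis tb db])
      have t: "take (Suc k) ?s = xt k" using take_xt k .
      have d: "\<phi> 2 (drop k ?s) [\<beta>, \<beta>] = \<phi> 2 (xt (i - k)) [\<beta>, \<beta>]"
      proof (cases "even k")
        case True then show ?thesis using drop_xt[OF k] by simp
      next
        case False
        then have dd: "drop k ?s = act t12 (xt (i - k))" using drop_xt[OF k] by simp
        have "\<phi> 2 (act t12 (xt (i - k))) [\<beta>, \<beta>] = \<phi> 2 (xt (i - k)) (map (\<lambda>j. [\<beta>, \<beta>] ! t12 j) [0..<2])"
          by (rule alg_equiv[OF alg _ xt_basis t12_perm]) simp_all
        then show ?thesis unfolding dd perm_t12_2 .
      qed
      show "phiC \<phi> 4 (compE [2,2] (xt 0) [take (Suc k) ?s, drop k ?s]) ?xs = cup \<phi> 0 (cup \<phi> k \<alpha> \<alpha>) (cup \<phi> (i - k) \<beta> \<beta>)"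
        unfolding c by (simp only: t d cup_def)
    qed
    also have "\<dots> = (\<Sum>j\<le>i. cup \<phi> 0 (cup \<phi> j \<alpha> \<alpha>) (cup \<phi> (i - j) \<beta> \<beta>))"
      by (simp add: lessThan_Suc_atMost)
    finally show ?thesis .
  qed
  have L: "phiC \<phi> 4 (linext H (bdE ?s)) ?xs = 0"
  proof (cases i)
    case 0
    then show ?thesis by (simp add: bdE_def linext_zero phiC_zero)
  next
    case (Suc m)
    let ?t = "xt (Suc m)"
    let ?g = "\<lambda>j. if nondeg (del_nth j ?t) then phiC \<phi> 4 (H (del_nth j ?t)) ?xs else 0"
    have "bdE ?t = (\<Sum>j<Suc (Suc m). bas (del_nth j ?t))" by (simp add: bdE_def)
    then have "linext H (bdE ?t) = (\<Sum>j<Suc (Suc m). linext H (bas (del_nth j ?t)))"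
      by (simp only: linext_sum[OF chain_two finite_lessThan])
    then have "phiC \<phi> 4 (linext H (bdE ?t)) ?xs = (\<Sum>j<Suc (Suc m). phiC \<phi> 4 (linext H (bas (del_nth j ?t))) ?xs)"
      by (simp only: phiC_sum[OF two finite_lessThan])
    also have "\<dots> = (\<Sum>j<Suc (Suc m). ?g j)"
      by (rule sum.cong) (simp_all add: linext_bas phiC_zero)
    also have "\<dots> = (\<Sum>j\<in>{0, Suc m}. ?g j)"
    proof (rule sum.mono_neutral_right)
      show "\<forall>j\<in>{..<Suc (Suc m)} - {0, Suc m}. ?g j = 0"
      proof
        fix j assume "j \<in> {..<Suc (Suc m)} - {0, Suc m}"
        then have "0 < j" "j < Suc m" by auto
        then show "?g j = 0" using del_mid by simp
      qed
    qed auto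
    also have "\<dots> = ?g 0 + ?g (Suc m)" by simp
    also have "?g 0 = phiC \<phi> 4 (H (xt m)) ?xs"
    proof -
      have nd: "nondeg (act t12 (xt m))" by (rule act_nondeg[OF permutes_inj[OF t12_perm] xt_nondeg])
      have he: "H (act t12 (xt m)) = actc t12_34 (H (xt m))" using H_equiv xt_basis by blast
      have "phiC \<phi> 4 (actc t12_34 (H (xt m))) ?xs = phiC \<phi> 4 (H (xt m)) (map (\<lambda>j. ?xs ! t12_34 j) [0..<4])"
        by (rule phiC_actc[OF alg keysH _ t12_34_perm]) simp_all
      then show ?thesis using nd he by (simp add: del_first perm_t12_34)
    qed
    also have "?g (Suc m) = phiC \<phi> 4 (H (xt m)) ?xs" by (simp add: del_last xt_nondeg)
    finally show ?thesis using two Suc by simp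
  qed
  have D: "homd dA 4 (phiC \<phi> 4 (H ?s)) ?xs =
           cup \<phi> i (cup \<phi> 0 \<alpha> \<beta>) (cup \<phi> 0 \<alpha> \<beta>)
           + (\<Sum>j\<le>i. cup \<phi> 0 (cup \<phi> j \<alpha> \<alpha>) (cup \<phi> (i - j) \<beta> \<beta>))"
    unfolding hom bd phiC_add[OF two] F G L by simp
  moreover have "dA \<alpha> = 0 \<and> dA \<beta> = 0 \<longrightarrow> dA (zeta \<phi> H i \<alpha> \<beta>) = homd dA 4 (phiC \<phi> 4 (H ?s)) ?xs"
  proof
    assume z: "dA \<alpha> = 0 \<and> dA \<beta> = 0"
    have "(\<Sum>j<4. phiC \<phi> 4 (H ?s) (?xs[j := dA (?xs ! j)])) = (\<Sum>j<(4::nat). 0)"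
    proof (rule sum.cong[OF refl])
      fix j assume "j \<in> {..<(4::nat)}"
      then have j: "j < 4" by simp
      then have "j = 0 \<or> j = 1 \<or> j = 2 \<or> j = 3" by auto
      then have "dA (?xs ! j) = 0" using z by auto
      then show "phiC \<phi> 4 (H ?s) (?xs[j := dA (?xs ! j)]) = 0"
        using phiC_zero_entry[OF alg keysH _ _ j, of ?xs] by simp
    qed
    then show "dA (zeta \<phi> H i \<alpha> \<beta>) = homd dA 4 (phiC \<phi> 4 (H ?s)) ?xs"
      by (simp add: homd_def zeta_def)
  qed
  ultimately show ?thesis by simp
qed

end
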